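(* Let $q\in\mathbb{C}$ with $0<|q|<1$ and $l,m,n,u\in\mathbb{N}$. Then \[ \sum_{k=0}^\infty\frac{q^{k^2} (q)_{l+m+n-k}} {(q)_k (q)_{l-k}(q)_{m-k}(q)_{n-k} (q)_{u+k}} =\sum_{k=-\infty}^\infty\frac{(-1)^k q^{(5k^2-k)/2} (q)_{l+m}(q)_{l+n}(q)_{m+n}(q)_{u-1}} {(q)_{l-k}(q)_{m-k}(q)_{n-k}(q)_{u-k}(q)_{l+k}(q)_{m+k}(q)_{n+k}(q)_{u+k-1}}, \] and \[ \sum_{k=0}^\infty\frac{q^{k^2+k} (q)_{l+m+n-k}} {(q)_k (q)_{l-k}(q)_{m-k}(q)_{n-k}(q)_{u+k}} =\sum_{k=-\infty}^\infty\frac{(-1)^k q^{(5k^2-3k)/2} (q)_{l+m}(q)_{m+n}(q)_{l+n}(q)_{u-1}} {(q)_{l-k}(q)_{m-k}(q)_{n-k}(q)_{u-k}(q)_{l+k}(q)_{m+k}(q)_{n+k}(q)_{u+k-1}}. \]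
   Context: For an integer $n$, $(q)_n=(q;q)_n$ with $(q)_0=1$, $(q)_n=(1-q)(1-q^2)\cdots(1-q^n)$ for $n\ge1$, and $(q)_n=[(1-q^{0})\cdots]$ interpreted via $(a)_n=[(1-aq^{-1})(1-aq^{-2})\cdots(1-aq^{n})]^{-1}$ for $n\le-1$ with $a=q$; in particular $(q)_{-1}=1/(1-q^{0})$ is not used as a value except through the convention $1/(q)_n=0$ for $n<0$. *)

theory Defs
  imports "HOL-Analysis.Analysis"
begin

definition qpoch :: "complex \<Rightarrow> nat \<Rightarrow> complex" where
  "qpoch q n = (\<Prod>i\<in>{1..n}. 1 - q ^ i)"

definition qpinv :: "complex \<Rightarrow> int \<Rightarrow> complex" where
  "qpinv q n = (if n < 0 then 0 else 1 / qpoch q (nat n))"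

end

theory Submission
  imports Defs
begin

definition R :: "complex \<Rightarrow> int \<Rightarrow> complex" where
  "R q n = qpoch q (nat n)"

definition qb :: "complex \<Rightarrow> int \<Rightarrow> int \<Rightarrow> complex" where
  "qb q n k = R q n * qpinv q k * qpinv q (n - k)"

definition PP :: "complex \<Rightarrow> int \<Rightarrow> int \<Rightarrow> complex" where
  "PP q a k = qpinv q (a - k) * qpinv q (a + k)"

definition zs :: "(int \<Rightarrow> complex) \<Rightarrow> complex" where
  "zs f = sum f {i. f i \<noteq> 0}"

lemma zs_eq:
  assumes "finite A" "\<And>i. i \<notin> A \<Longrightarrow> f i = 0"
  shows "zs f = sum f A"
proof -
  have "{i. f i \<noteq> 0} \<subseteq> A" using assms(2) by blast
  then show ?thesis unfolding zs_def
    using assms(1) by (intro sum.mono_neutral_left) auto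
qed

lemma zs_cmult: "zs (\<lambda>i. c * f i) = c * zs f"
proof (cases "c = 0")
  case True then show ?thesis by (simp add: zs_def)
next
  case False
  then have "{i. c * f i \<noteq> 0} = {i. f i \<noteq> 0}" by auto
  then show ?thesis by (simp add: zs_def sum_distrib_left)
qed

lemma zs_add:
  assumes "finite A" "\<And>i. i \<notin> A \<Longrightarrow> f i = 0" "\<And>i. i \<notin> A \<Longrightarrow> g i = 0"
  shows "zs (\<lambda>i. f i + g i) = zs f + zs g"
  using assms by (simp add: zs_eq[of A] sum.distrib)

lemma zs_diff:
  assumes "finite A" "\<And>i. i \<notin> A \<Longrightarrow> f i = 0" "\<And>i. i \<notin> A \<Longrightarrow> g i = 0"
  shows "zs (\<lambda>i. f i - g i) = zs f - zs g"
  using assms by (simp add: zs_eq[of A] sum_subtractf)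

lemma zs_shift: "zs (\<lambda>i. f (i + c)) = zs f"
proof -
  have "{i. f (i + c) \<noteq> 0} = (\<lambda>i. i - c) ` {i. f i \<noteq> 0}"
    by (auto simp: image_iff) (metis add_diff_cancel)
  moreover have "inj_on (\<lambda>i. i - c) {i. f i \<noteq> 0}" by (auto simp: inj_on_def)
  ultimately show ?thesis unfolding zs_def by (simp add: sum.reindex)
qed

lemma zs_refl: "zs (\<lambda>i. f (- i)) = zs f"
proof -
  have "{i. f (- i) \<noteq> 0} = uminus ` {i. f i \<noteq> 0}"
    by (auto simp: image_iff) (metis minus_minus)
  moreover have "inj_on uminus {i::int. f i \<noteq> 0}" by (auto simp: inj_on_def)
  ultimately show ?thesis unfolding zs_def by (simp add: sum.reindex)
qed

lemma zs_cong: "(\<And>i. f i = g i) \<Longrightarrow> zs f = zs g"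
  by (metis ext)

lemma zs_single: "(\<And>i. i \<noteq> a \<Longrightarrow> f i = 0) \<Longrightarrow> zs f = f a"
  by (subst zs_eq[of "{a}"]) auto

lemma zs_swap:
  assumes "finite A" "finite B" "\<And>i j. g i j \<noteq> 0 \<Longrightarrow> i \<in> A \<and> j \<in> B"
  shows "zs (\<lambda>i. zs (\<lambda>j. g i j)) = zs (\<lambda>j. zs (\<lambda>i. g i j))"
proof -
  have 1: "zs (\<lambda>j. g i j) = sum (g i) B" for i
    using assms by (intro zs_eq) auto
  have 2: "zs (\<lambda>i. g i j) = sum (\<lambda>i. g i j) A" for j
    using assms by (intro zs_eq) auto
  have "zs (\<lambda>i. zs (\<lambda>j. g i j)) = sum (\<lambda>i. sum (g i) B) A"
    unfolding 1 using assms by (intro zs_eq) (auto intro!: sum.neutral)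
  also have "\<dots> = sum (\<lambda>j. sum (\<lambda>i. g i j) A) B" by (rule sum.swap)
  also have "\<dots> = zs (\<lambda>j. zs (\<lambda>i. g i j))"
    unfolding 2 using assms by (intro zs_eq[symmetric]) (auto intro!: sum.neutral)
  finally show ?thesis .
qed


lemma qpoch_Suc: "qpoch q (Suc n) = qpoch q n * (1 - q ^ Suc n)"
  unfolding qpoch_def by (simp add: prod.nat_ivl_Suc')

context
  fixes q :: complex
  assumes q0: "q \<noteq> 0" and q1: "norm q < 1"
begin

lemma one_minus_pow_nz: "0 < n \<Longrightarrow> 1 - q ^ n \<noteq> 0"
proof
  assume "0 < n" "1 - q ^ n = 0"
  then have "norm (q ^ n) = 1" by simp
  moreover have "norm (q ^ n) < 1"
    using \<open>0 < n\<close> q1 by (simp add: norm_power power_less_one_iff)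
  ultimately show False by simp
qed

lemma qpoch_nz: "qpoch q n \<noteq> 0"
  unfolding qpoch_def using one_minus_pow_nz by (auto simp: prod_zero_iff)

lemma Qneg: "n < 0 \<Longrightarrow> qpinv q n = 0"
  by (simp add: qpinv_def)

lemma QR: "0 \<le> n \<Longrightarrow> qpinv q n * R q n = 1"
  by (simp add: qpinv_def R_def qpoch_nz)

lemma RQ: "0 \<le> n \<Longrightarrow> R q n * qpinv q n = 1"
  by (simp add: qpinv_def R_def qpoch_nz)

lemma R_nz: "R q n \<noteq> 0"
  by (simp add: R_def qpoch_nz)

lemma Rrec: "0 \<le> n \<Longrightarrow> R q (n + 1) = R q n * (1 - q powi (n + 1))"
proof -
  assume "0 \<le> n"
  then obtain m where m: "n = int m" by (metis nonneg_eq_int)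
  have "nat (int m + 1) = Suc m" by simp
  then show ?thesis unfolding R_def m
    by (simp add: qpoch_Suc power_int_def)
qed

lemma Qrec: "qpinv q n = (1 - q powi (n + 1)) * qpinv q (n + 1)"
proof (cases "n \<ge> 0")
  case True
  then obtain m where m: "n = int m" by (metis nonneg_eq_int)
  have e: "nat (int m + 1) = Suc m" "nat (1 + int m) = Suc m" by simp_all
  have "q powi (int m + 1) = q ^ Suc m"
    by (metis of_nat_Suc add.commute power_int_of_nat)
  then show ?thesis unfolding m qpinv_def
    using qpoch_nz[of m] one_minus_pow_nz[of "Suc m"]
    by (simp add: e qpoch_Suc field_simps)
next
  case False
  then show ?thesis
  proof (cases "n = -1")
    case True then show ?thesis by (simp add: Qneg)
  next
    case False
    then show ?thesis using \<open>\<not> n \<ge> 0\<close> by (simp add: Qneg)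
  qed
qed

lemma pw: "q powi (a + b) = q powi a * q powi b"
  using q0 by (simp add: power_int_add)

lemma pw_nz: "q powi a \<noteq> 0"
  using q0 by simp

lemma Qm1: "qpinv q (k - 1) = (1 - q powi k) * qpinv q k"
  using Qrec[of "k - 1"] by simp

lemma Qnk: "qpinv q (n - k) = (1 - q powi (n - k + 1)) * qpinv q (n + 1 - k)"
  using Qrec[of "n - k"] by (simp add: algebra_simps)

lemma pascal1: "0 \<le> n \<Longrightarrow> qb q (n+1) k = qb q n (k-1) + q powi k * qb q n k"
proof -
  assume n: "0 \<le> n"
  have h3: "q powi (n + 1) = q powi k * q powi (n - k + 1)"
    using pw[of k "n - k + 1"] by simp
  have "qb q n (k-1) + q powi k * qb q n k
      = R q n * qpinv q k * qpinv q (n + 1 - k) * ((1 - q powi k) + q powi k * (1 - q powi (n - k + 1)))"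
    unfolding qb_def Qm1[of k] Qnk[of n k] by (simp add: algebra_simps)
  also have "\<dots> = R q n * qpinv q k * qpinv q (n + 1 - k) * (1 - q powi (n + 1))"
    unfolding h3 by (simp add: algebra_simps)
  also have "\<dots> = qb q (n+1) k"
    unfolding qb_def Rrec[OF n] by (simp add: algebra_simps)
  finally show ?thesis by simp
qed

lemma pascal2: "0 \<le> n \<Longrightarrow> qb q (n+1) k = q powi (n + 1 - k) * qb q n (k-1) + qb q n k"
proof -
  assume n: "0 \<le> n"
  have h3: "q powi (n + 1) = q powi (n + 1 - k) * q powi k"
    using pw[of "n + 1 - k" k] by simp
  have e: "n - k + 1 = n + 1 - k" by simp
  have "q powi (n + 1 - k) * qb q n (k-1) + qb q n k
      = R q n * qpinv q k * qpinv q (n + 1 - k) * (q powi (n + 1 - k) * (1 - q powi k) + (1 - q powi (n + 1 - k)))"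
    unfolding qb_def Qm1[of k] Qnk[of n k] e by (simp add: algebra_simps)
  also have "\<dots> = R q n * qpinv q k * qpinv q (n + 1 - k) * (1 - q powi (n + 1))"
    unfolding h3 by (simp add: algebra_simps)
  also have "\<dots> = qb q (n+1) k"
    unfolding qb_def Rrec[OF n] by (simp add: algebra_simps)
  finally show ?thesis by simp
qed

lemma pw2: "a + b = c + d \<Longrightarrow> q powi a * q powi b = q powi c * q powi d"
  by (metis pw)

lemma qb_zero: "i < 0 \<or> a < i \<Longrightarrow> qb q a i = 0"
  unfolding qb_def by (auto simp: Qneg)

lemma qb0: "i \<noteq> 0 \<Longrightarrow> qb q 0 i = 0"
  by (rule qb_zero) auto

lemma qb00: "qb q 0 0 = 1"
  by (simp add: qb_def R_def qpinv_def qpoch_def)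

lemma V1:
  fixes N :: nat
  shows "0 \<le> d \<Longrightarrow> zs (\<lambda>i. q powi (i*(d-b+i)) * qb q (int N) i * qb q d (b-i)) = qb q (int N + d) b"
proof (induction N arbitrary: b)
  case 0
  have "zs (\<lambda>i. q powi (i*(d-b+i)) * qb q (int 0) i * qb q d (b-i)) = q powi (0*(d-b+0)) * qb q 0 0 * qb q d (b-0)"
    by (subst zs_single[where a=0]) (auto simp: qb0)
  then show ?case by (simp add: qb00)
next
  case (Suc N)
  have split: "qb q (int (Suc N)) i = q powi (int N + 1 - i) * qb q (int N) (i-1) + qb q (int N) i" for i
    using pascal2[of "int N" i] by (simp add: add.commute)
  have "zs (\<lambda>i. q powi (i*(d-b+i)) * qb q (int (Suc N)) i * qb q d (b-i))
      = zs (\<lambda>i. q powi (i*(d-b+i)) * (q powi (int N + 1 - i) * qb q (int N) (i-1)) * qb q d (b-i)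
             + q powi (i*(d-b+i)) * qb q (int N) i * qb q d (b-i))"
    unfolding split by (rule zs_cong) (simp add: algebra_simps)
  also have "\<dots> = zs (\<lambda>i. q powi (i*(d-b+i)) * (q powi (int N + 1 - i) * qb q (int N) (i-1)) * qb q d (b-i))
             + zs (\<lambda>i. q powi (i*(d-b+i)) * qb q (int N) i * qb q d (b-i))"
    by (rule zs_add[of "{0..int N + 1}"]) (auto simp: qb_zero)
  also have "zs (\<lambda>i. q powi (i*(d-b+i)) * (q powi (int N + 1 - i) * qb q (int N) (i-1)) * qb q d (b-i))
      = zs (\<lambda>j. q powi ((j+1)*(d-b+(j+1))) * (q powi (int N + 1 - (j+1)) * qb q (int N) (j+1-1)) * qb q d (b-(j+1)))"
    by (rule zs_shift[symmetric])
  also have "\<dots> = zs (\<lambda>j. q powi (int N + d + 1 - b) * (q powi (j*(d-(b-1)+j)) * qb q (int N) j * qb q d ((b-1)-j)))"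
  proof (rule zs_cong)
    fix j :: int
    have "q powi ((j+1)*(d-b+(j+1))) * q powi (int N + 1 - (j+1)) = q powi (int N + d + 1 - b) * q powi (j*(d-(b-1)+j))"
      by (rule pw2) (simp add: algebra_simps)
    moreover have "b - (j+1) = (b-1) - j" by simp
    ultimately show "q powi ((j+1)*(d-b+(j+1))) * (q powi (int N + 1 - (j+1)) * qb q (int N) (j+1-1)) * qb q d (b-(j+1))
       = q powi (int N + d + 1 - b) * (q powi (j*(d-(b-1)+j)) * qb q (int N) j * qb q d ((b-1)-j))"
      by (metis (no_types, lifting) add_diff_cancel_right' mult.assoc)
  qed
  also have "\<dots> = q powi (int N + d + 1 - b) * qb q (int N + d) (b-1)"
    by (simp add: zs_cmult Suc.IH[OF Suc.prems])
  also have "zs (\<lambda>i. q powi (i*(d-b+i)) * qb q (int N) i * qb q d (b-i)) = qb q (int N + d) b"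
    by (rule Suc.IH[OF Suc.prems])
  finally show ?case
    using pascal2[of "int N + d" b] Suc.prems by (simp add: algebra_simps)
qed

lemma V2:
  fixes N :: nat
  shows "0 \<le> d \<Longrightarrow> zs (\<lambda>i. q powi ((int N - i)*(b-i)) * qb q (int N) i * qb q d (b-i)) = qb q (int N + d) b"
proof (induction N arbitrary: b)
  case 0
  have "zs (\<lambda>i. q powi ((int 0 - i)*(b-i)) * qb q (int 0) i * qb q d (b-i)) = q powi ((0-0)*(b-0)) * qb q 0 0 * qb q d (b-0)"
    by (subst zs_single[where a=0]) (auto simp: qb0)
  then show ?case by (simp add: qb00)
next
  case (Suc N)
  have split: "qb q (int (Suc N)) i = qb q (int N) (i-1) + q powi i * qb q (int N) i" for i
    using pascal1[of "int N" i] by (simp add: add.commute)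
  have "zs (\<lambda>i. q powi ((int (Suc N) - i)*(b-i)) * qb q (int (Suc N)) i * qb q d (b-i))
      = zs (\<lambda>i. q powi ((int (Suc N) - i)*(b-i)) * qb q (int N) (i-1) * qb q d (b-i)
             + q powi ((int (Suc N) - i)*(b-i)) * (q powi i * qb q (int N) i) * qb q d (b-i))"
    unfolding split by (rule zs_cong) (simp add: algebra_simps)
  also have "\<dots> = zs (\<lambda>i. q powi ((int (Suc N) - i)*(b-i)) * qb q (int N) (i-1) * qb q d (b-i))
             + zs (\<lambda>i. q powi ((int (Suc N) - i)*(b-i)) * (q powi i * qb q (int N) i) * qb q d (b-i))"
    by (rule zs_add[of "{0..int N + 1}"]) (auto simp: qb_zero)
  also have "zs (\<lambda>i. q powi ((int (Suc N) - i)*(b-i)) * qb q (int N) (i-1) * qb q d (b-i))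
      = zs (\<lambda>j. q powi ((int (Suc N) - (j+1))*(b-(j+1))) * qb q (int N) (j+1-1) * qb q d (b-(j+1)))"
    by (rule zs_shift[symmetric])
  also have "\<dots> = zs (\<lambda>j. q powi ((int N - j)*((b-1)-j)) * qb q (int N) j * qb q d ((b-1)-j))"
  proof (rule zs_cong)
    fix j :: int
    have "(int (Suc N) - (j+1))*(b-(j+1)) = (int N - j)*((b-1)-j)" by (simp add: algebra_simps)
    moreover have "b - (j+1) = (b-1) - j" by simp
    ultimately show "q powi ((int (Suc N) - (j+1))*(b-(j+1))) * qb q (int N) (j+1-1) * qb q d (b-(j+1))
       = q powi ((int N - j)*((b-1)-j)) * qb q (int N) j * qb q d ((b-1)-j)"
      by (metis add_diff_cancel_right')
  qed
  also have "\<dots> = qb q (int N + d) (b-1)"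
    by (rule Suc.IH[OF Suc.prems])
  also have "zs (\<lambda>i. q powi ((int (Suc N) - i)*(b-i)) * (q powi i * qb q (int N) i) * qb q d (b-i))
      = zs (\<lambda>i. q powi b * (q powi ((int N - i)*(b-i)) * qb q (int N) i * qb q d (b-i)))"
  proof (rule zs_cong)
    fix i :: int
    have "q powi ((int (Suc N) - i)*(b-i)) * q powi i = q powi b * q powi ((int N - i)*(b-i))"
      by (rule pw2) (simp add: algebra_simps)
    then show "q powi ((int (Suc N) - i)*(b-i)) * (q powi i * qb q (int N) i) * qb q d (b-i)
      = q powi b * (q powi ((int N - i)*(b-i)) * qb q (int N) i * qb q d (b-i))"
      by (metis (no_types, lifting) mult.assoc)
  qed
  also have "\<dots> = q powi b * qb q (int N + d) b"
    by (simp add: zs_cmult Suc.IH[OF Suc.prems])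
  finally show ?case
    using pascal1[of "int N + d" b] Suc.prems by (simp add: algebra_simps)
qed

lemma zs_zero: "(\<And>i. f i = 0) \<Longrightarrow> zs f = 0"
  by (simp add: zs_def)

lemma PP_neg: "PP q j (- k) = PP q j k"
  by (simp add: PP_def mult.commute)

lemma PP_zero: "j < k \<or> j < -k \<Longrightarrow> PP q j k = 0"
  by (auto simp: PP_def Qneg)

lemma PP_negj: "j < 0 \<Longrightarrow> PP q j k = 0"
  by (rule PP_zero) linarith

lemma K1pos:
  assumes a: "0 \<le> a" and b: "0 \<le> b" and k: "0 \<le> k"
  shows "q powi (k^2) * PP q a k * PP q b k
    = qpinv q (a+b) * zs (\<lambda>j. q powi (j^2) * qpinv q (a-j) * qpinv q (b-j) * PP q j k)"
proof (cases "a < k")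
  case True
  have "zs (\<lambda>j. q powi (j^2) * qpinv q (a-j) * qpinv q (b-j) * PP q j k) = 0"
  proof (rule zs_zero)
    fix j :: int
    show "q powi (j^2) * qpinv q (a-j) * qpinv q (b-j) * PP q j k = 0"
      using True by (cases "j \<le> a") (auto simp: Qneg PP_zero)
  qed
  moreover have "PP q a k = 0" using True by (simp add: PP_zero)
  ultimately show ?thesis by simp
next
  case False
  define X where "X = zs (\<lambda>i. q powi (i*(2*k+i)) * qpinv q i * qpinv q (a-k-i) * qpinv q (b-k-i) * qpinv q (2*k+i))"
  obtain N where N: "a - k = int N" using False by (metis nonneg_eq_int not_less diff_ge_0_iff_ge)
  have v: "zs (\<lambda>i. q powi (i*((b+k)-(b-k)+i)) * qb q (int N) i * qb q (b+k) ((b-k)-i)) = qb q (int N + (b+k)) (b-k)"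
    using b k by (intro V1) simp
  have "zs (\<lambda>i. q powi (i*((b+k)-(b-k)+i)) * qb q (int N) i * qb q (b+k) ((b-k)-i))
      = zs (\<lambda>i. (R q (a-k) * R q (b+k)) * (q powi (i*(2*k+i)) * qpinv q i * qpinv q (a-k-i) * qpinv q (b-k-i) * qpinv q (2*k+i)))"
    by (rule zs_cong) (simp add: qb_def N[symmetric] algebra_simps)
  also have "\<dots> = R q (a-k) * R q (b+k) * X" unfolding X_def by (rule zs_cmult)
  finally have v2: "R q (a-k) * R q (b+k) * X = R q (a+b) * qpinv q (b-k) * qpinv q (a+k)"
    using v by (simp add: qb_def N[symmetric] algebra_simps)
  have QR1: "qpinv q (a-k) * R q (a-k) = 1" "qpinv q (b+k) * R q (b+k) = 1" "qpinv q (a+b) * R q (a+b) = 1"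
    using False a b k by (auto intro!: QR)
  have "X = (qpinv q (a-k) * R q (a-k)) * (qpinv q (b+k) * R q (b+k)) * X" using QR1 by simp
  also have "\<dots> = qpinv q (a-k) * qpinv q (b+k) * (R q (a-k) * R q (b+k) * X)" by (simp add: algebra_simps)
  finally have X: "X = qpinv q (a-k) * qpinv q (b+k) * (R q (a+b) * qpinv q (b-k) * qpinv q (a+k))"
    using v2 by simp
  have "zs (\<lambda>j. q powi (j^2) * qpinv q (a-j) * qpinv q (b-j) * PP q j k)
      = zs (\<lambda>i. q powi ((i+k)^2) * qpinv q (a-(i+k)) * qpinv q (b-(i+k)) * PP q (i+k) k)"
    by (rule zs_shift[symmetric])
  also have "\<dots> = zs (\<lambda>i. q powi (k^2) * (q powi (i*(2*k+i)) * qpinv q i * qpinv q (a-k-i) * qpinv q (b-k-i) * qpinv q (2*k+i)))"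
  proof (rule zs_cong)
    fix i :: int
    have "q powi ((i+k)^2) = q powi (k^2) * q powi (i*(2*k+i))"
      using pw[of "k^2" "i*(2*k+i)"] by (simp add: power2_eq_square algebra_simps)
    then show "q powi ((i+k)^2) * qpinv q (a-(i+k)) * qpinv q (b-(i+k)) * PP q (i+k) k
      = q powi (k^2) * (q powi (i*(2*k+i)) * qpinv q i * qpinv q (a-k-i) * qpinv q (b-k-i) * qpinv q (2*k+i))"
      by (simp add: PP_def algebra_simps)
  qed
  also have "\<dots> = q powi (k^2) * X" unfolding X_def by (rule zs_cmult)
  finally show ?thesis unfolding X PP_def using QR1
    by (simp add: algebra_simps)
qed

lemma K1:
  assumes a: "0 \<le> a" and b: "0 \<le> b"
  shows "q powi (k^2) * PP q a k * PP q b k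
    = qpinv q (a+b) * zs (\<lambda>j. q powi (j^2) * qpinv q (a-j) * qpinv q (b-j) * PP q j k)"
proof (cases "0 \<le> k")
  case True then show ?thesis using K1pos[OF a b] by simp
next
  case False
  then have "0 \<le> -k" by simp
  from K1pos[OF a b this] show ?thesis by (simp add: PP_neg)
qed

lemma K2pos:
  assumes a: "0 \<le> a" and b: "0 \<le> b" and k: "0 \<le> k"
  shows "PP q a k * PP q b k
    = qpinv q (a+b) * zs (\<lambda>j. q powi ((a-j)*(b-j)) * qpinv q (a-j) * qpinv q (b-j) * PP q j k)"
proof (cases "a < k")
  case True
  have "zs (\<lambda>j. q powi ((a-j)*(b-j)) * qpinv q (a-j) * qpinv q (b-j) * PP q j k) = 0"
  proof (rule zs_zero)
    fix j :: int
    show "q powi ((a-j)*(b-j)) * qpinv q (a-j) * qpinv q (b-j) * PP q j k = 0"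
      using True by (cases "j \<le> a") (auto simp: Qneg PP_zero)
  qed
  moreover have "PP q a k = 0" using True by (simp add: PP_zero)
  ultimately show ?thesis by simp
next
  case False
  define X where "X = zs (\<lambda>i. q powi ((a-k-i)*(b-k-i)) * qpinv q i * qpinv q (a-k-i) * qpinv q (b-k-i) * qpinv q (2*k+i))"
  obtain N where N: "a - k = int N" using False by (metis nonneg_eq_int not_less diff_ge_0_iff_ge)
  have v: "zs (\<lambda>i. q powi ((int N - i)*((b-k)-i)) * qb q (int N) i * qb q (b+k) ((b-k)-i)) = qb q (int N + (b+k)) (b-k)"
    using b k by (intro V2) simp
  have "zs (\<lambda>i. q powi ((int N - i)*((b-k)-i)) * qb q (int N) i * qb q (b+k) ((b-k)-i))
      = zs (\<lambda>i. (R q (a-k) * R q (b+k)) * (q powi ((a-k-i)*(b-k-i)) * qpinv q i * qpinv q (a-k-i) * qpinv q (b-k-i) * qpinv q (2*k+i)))"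
    by (rule zs_cong) (simp add: qb_def N[symmetric] algebra_simps)
  also have "\<dots> = R q (a-k) * R q (b+k) * X" unfolding X_def by (rule zs_cmult)
  finally have v2: "R q (a-k) * R q (b+k) * X = R q (a+b) * qpinv q (b-k) * qpinv q (a+k)"
    using v by (simp add: qb_def N[symmetric] algebra_simps)
  have QR1: "qpinv q (a-k) * R q (a-k) = 1" "qpinv q (b+k) * R q (b+k) = 1" "qpinv q (a+b) * R q (a+b) = 1"
    using False a b k by (auto intro!: QR)
  have "X = (qpinv q (a-k) * R q (a-k)) * (qpinv q (b+k) * R q (b+k)) * X" using QR1 by simp
  also have "\<dots> = qpinv q (a-k) * qpinv q (b+k) * (R q (a-k) * R q (b+k) * X)" by (simp add: algebra_simps)
  finally have X: "X = qpinv q (a-k) * qpinv q (b+k) * (R q (a+b) * qpinv q (b-k) * qpinv q (a+k))"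
    using v2 by simp
  have "zs (\<lambda>j. q powi ((a-j)*(b-j)) * qpinv q (a-j) * qpinv q (b-j) * PP q j k)
      = zs (\<lambda>i. q powi ((a-(i+k))*(b-(i+k))) * qpinv q (a-(i+k)) * qpinv q (b-(i+k)) * PP q (i+k) k)"
    by (rule zs_shift[symmetric])
  also have "\<dots> = X"
    unfolding X_def by (rule zs_cong) (simp add: PP_def algebra_simps)
  finally show ?thesis unfolding X PP_def using QR1
    by (simp add: algebra_simps)
qed

lemma K2:
  assumes a: "0 \<le> a" and b: "0 \<le> b"
  shows "PP q a k * PP q b k
    = qpinv q (a+b) * zs (\<lambda>j. q powi ((a-j)*(b-j)) * qpinv q (a-j) * qpinv q (b-j) * PP q j k)"
proof (cases "0 \<le> k")
  case True then show ?thesis using K2pos[OF a b] by simp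
next
  case False
  then have "0 \<le> -k" by simp
  from K2pos[OF a b this] show ?thesis by (simp add: PP_neg)
qed

lemma ev2: "even ((k::int) * (k - 1))"
  by (cases "even k") auto

lemma C2_add: "((k::int)+j)*(k+j-1) div 2 = k*(k-1) div 2 + j*(j-1) div 2 + j*k"
proof -
  obtain a where a: "k*(k-1) = 2*a" using ev2[of k] by blast
  obtain b where b: "j*(j-1) = 2*b" using ev2[of j] by blast
  have "(k+j)*(k+j-1) = 2*(a + b + j*k)" using a b by (simp add: algebra_simps)
  then show ?thesis using a b by simp
qed

lemma m1pow: "(-1::complex) powi (s + 1) = - ((-1) powi s)"
  by (simp add: power_int_add)

lemma Rothe:
  fixes N :: nat
  assumes x: "x \<noteq> 0"
  shows "zs (\<lambda>r. (-1) powi r * q powi (r*(r-1) div 2) * qb q (int N) r * x powi r) = (\<Prod>i<N. (1 - x * q^i))"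
proof (induction N)
  case 0
  show ?case by (subst zs_single[where a=0]) (auto simp: qb0 qb00)
next
  case (Suc N)
  have split: "qb q (int (Suc N)) r = q powi (int N + 1 - r) * qb q (int N) (r-1) + qb q (int N) r" for r
    using pascal2[of "int N" r] by (simp add: add.commute)
  have "zs (\<lambda>r. (-1) powi r * q powi (r*(r-1) div 2) * qb q (int (Suc N)) r * x powi r)
      = zs (\<lambda>r. (-1) powi r * q powi (r*(r-1) div 2) * (q powi (int N + 1 - r) * qb q (int N) (r-1)) * x powi r
          + (-1) powi r * q powi (r*(r-1) div 2) * qb q (int N) r * x powi r)"
    unfolding split by (rule zs_cong) (simp add: algebra_simps)
  also have "\<dots> = zs (\<lambda>r. (-1) powi r * q powi (r*(r-1) div 2) * (q powi (int N + 1 - r) * qb q (int N) (r-1)) * x powi r)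
          + zs (\<lambda>r. (-1) powi r * q powi (r*(r-1) div 2) * qb q (int N) r * x powi r)"
    by (rule zs_add[of "{0..int N + 1}"]) (auto simp: qb_zero)
  also have "zs (\<lambda>r. (-1) powi r * q powi (r*(r-1) div 2) * (q powi (int N + 1 - r) * qb q (int N) (r-1)) * x powi r)
     = zs (\<lambda>s. (-1) powi (s+1) * q powi ((s+1)*(s+1-1) div 2) * (q powi (int N + 1 - (s+1)) * qb q (int N) (s+1-1)) * x powi (s+1))"
    by (rule zs_shift[symmetric])
  also have "\<dots> = zs (\<lambda>s. (- x * q ^ N) * ((-1) powi s * q powi (s*(s-1) div 2) * qb q (int N) s * x powi s))"
  proof (rule zs_cong)
    fix s :: int
    have e0: "1*(1-1) div 2 = (0::int)" by simp
    have e: "(s+1)*(s+1-1) div 2 = s*(s-1) div 2 + s" using C2_add[of s 1] e0 by linarith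
    have "q powi ((s+1)*(s+1-1) div 2) * q powi (int N + 1 - (s+1)) = q powi (s*(s-1) div 2) * q powi (int N)"
      by (rule pw2) (unfold e, simp)
    moreover have "x powi (s+1) = x powi s * x" using x by (simp add: power_int_add)
    moreover have "q powi (int N) = q ^ N" by simp
    ultimately show "(-1) powi (s+1) * q powi ((s+1)*(s+1-1) div 2) * (q powi (int N + 1 - (s+1)) * qb q (int N) (s+1-1)) * x powi (s+1)
       = (- x * q ^ N) * ((-1) powi s * q powi (s*(s-1) div 2) * qb q (int N) s * x powi s)"
      unfolding m1pow by (simp add: algebra_simps)
  qed
  also have "\<dots> = (- x * q ^ N) * (\<Prod>i<N. (1 - x * q^i))"
    unfolding zs_cmult Suc.IH by (rule refl)
  finally show ?case using Suc.IH by (simp add: algebra_simps)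
qed

lemma U:
  "zs (\<lambda>k. (-1) powi k * q powi (k*(k-1) div 2) * PP q j k) = (if j = 0 then 1 else 0)"
proof (cases "j < 0")
  case True
  then show ?thesis by (auto intro!: zs_zero simp: PP_negj)
next
  case False
  show ?thesis
  proof (cases "j = 0")
    case True
    have "zs (\<lambda>k. (-1) powi k * q powi (k*(k-1) div 2) * PP q j k) = (-1) powi 0 * q powi (0*(0-1) div 2) * PP q j 0"
    proof (rule zs_single)
      fix k :: int assume "k \<noteq> 0"
      then have "PP q j k = 0" using True by (intro PP_zero) linarith
      then show "(-1) powi k * q powi (k*(k-1) div 2) * PP q j k = 0" by simp
    qed
    also have "\<dots> = 1" using True by (simp add: PP_def qpinv_def qpoch_def)
    finally show ?thesis using True by simp
  next
    case j0: False
    with False have jp: "0 < j" by simp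
    then obtain M where M: "j = int M" "0 < M" by (metis zero_less_imp_eq_int)
    define x where "x = q powi (-j)"
    have x0: "x \<noteq> 0" unfolding x_def by (rule pw_nz)
    have "(\<Prod>i<2*M. (1 - x * q^i)) = 0"
    proof -
      have "M \<in> {..<2*M}" using M by simp
      moreover have "1 - x * q^M = 0" unfolding x_def M
        using pw[of "- int M" "int M"] by simp
      ultimately show ?thesis by (meson finite_lessThan prod_zero)
    qed
    then have z: "zs (\<lambda>r. (-1) powi r * q powi (r*(r-1) div 2) * qb q (int (2*M)) r * x powi r) = 0"
      using Rothe[OF x0, of "2*M"] by simp
    define c where "c = (-1) powi j * q powi (j*(j-1) div 2 - j*j) * R q (2*j)"
    have c0: "c \<noteq> 0" unfolding c_def using q0 by (simp add: R_nz)
    have "zs (\<lambda>r. (-1) powi r * q powi (r*(r-1) div 2) * qb q (int (2*M)) r * x powi r)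
        = zs (\<lambda>k. (-1) powi (k+j) * q powi ((k+j)*(k+j-1) div 2) * qb q (int (2*M)) (k+j) * x powi (k+j))"
      by (rule zs_shift[symmetric])
    also have "\<dots> = zs (\<lambda>k. c * ((-1) powi k * q powi (k*(k-1) div 2) * PP q j k))"
    proof (rule zs_cong)
      fix k :: int
      have e1: "(-1::complex) powi (k+j) = (-1) powi k * (-1) powi j" by (simp add: power_int_add)
      have e2: "x powi (k+j) = q powi (- j * (k+j))" unfolding x_def by (rule power_int_mult[symmetric])
      have e3: "q powi ((k+j)*(k+j-1) div 2) * q powi (- j * (k+j)) = q powi (k*(k-1) div 2) * q powi (j*(j-1) div 2 - j*j)"
        by (rule pw2) (unfold C2_add, simp add: algebra_simps)
      have e4: "qb q (int (2*M)) (k+j) = R q (2*j) * PP q j k"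
        unfolding qb_def PP_def M by (simp add: algebra_simps)
      show "(-1) powi (k+j) * q powi ((k+j)*(k+j-1) div 2) * qb q (int (2*M)) (k+j) * x powi (k+j)
          = c * ((-1) powi k * q powi (k*(k-1) div 2) * PP q j k)"
        unfolding e1 e2 e4 c_def using e3 by (simp add: algebra_simps)
    qed
    also have "\<dots> = c * zs (\<lambda>k. (-1) powi k * q powi (k*(k-1) div 2) * PP q j k)"
      by (rule zs_cmult)
    finally show ?thesis using z c0 j0 by simp
  qed
qed

lemma PP_nz: "PP q j k \<noteq> 0 \<Longrightarrow> k \<le> j \<and> -k \<le> j"
proof -
  assume "PP q j k \<noteq> 0"
  then have "\<not> (j < k \<or> j < -k)" using PP_zero by blast
  then show ?thesis by simp
qed

lemma Q_nz: "qpinv q n \<noteq> 0 \<Longrightarrow> 0 \<le> n"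
  using Qneg by force

lemma solveR: "0 \<le> m \<Longrightarrow> 0 \<le> n \<Longrightarrow> R q m * R q n * X = Y \<Longrightarrow> X = qpinv q m * qpinv q n * Y"
proof -
  assume m: "0 \<le> m" and n: "0 \<le> n" and h: "R q m * R q n * X = Y"
  have "X = (qpinv q m * R q m) * (qpinv q n * R q n) * X" using QR[OF m] QR[OF n] by simp
  also have "\<dots> = qpinv q m * qpinv q n * (R q m * R q n * X)" by (simp add: algebra_simps)
  finally show ?thesis using h by simp
qed

lemma E:
  assumes l: "0 \<le> l"
  shows "zs (\<lambda>k. (-1) powi k * q powi (k*(k-1) div 2) * PP q l k * PP q i k)
       = q powi (l*i) * qpinv q l * qpinv q i * qpinv q (l+i)"
proof (cases "i < 0")
  case True
  then show ?thesis by (auto intro!: zs_zero simp: PP_negj Qneg)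
next
  case False
  then have i: "0 \<le> i" by simp
  define w where "w j = q powi ((l-j)*(i-j)) * qpinv q (l-j) * qpinv q (i-j)" for j
  have "zs (\<lambda>k. (-1) powi k * q powi (k*(k-1) div 2) * PP q l k * PP q i k)
      = zs (\<lambda>k. qpinv q (l+i) * zs (\<lambda>j. w j * ((-1) powi k * q powi (k*(k-1) div 2) * PP q j k)))"
  proof (rule zs_cong)
    fix k :: int
    have "PP q l k * PP q i k = qpinv q (l+i) * zs (\<lambda>j. w j * PP q j k)"
      unfolding w_def using K2[OF l i, of k] by (simp add: mult.assoc)
    moreover have "zs (\<lambda>j. w j * ((-1) powi k * q powi (k*(k-1) div 2) * PP q j k))
        = ((-1) powi k * q powi (k*(k-1) div 2)) * zs (\<lambda>j. w j * PP q j k)"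
      by (subst zs_cmult[symmetric]) (simp add: algebra_simps)
    ultimately show "(-1) powi k * q powi (k*(k-1) div 2) * PP q l k * PP q i k
      = qpinv q (l+i) * zs (\<lambda>j. w j * ((-1) powi k * q powi (k*(k-1) div 2) * PP q j k))"
      by (simp add: algebra_simps)
  qed
  also have "\<dots> = qpinv q (l+i) * zs (\<lambda>k. zs (\<lambda>j. w j * ((-1) powi k * q powi (k*(k-1) div 2) * PP q j k)))"
    by (rule zs_cmult)
  also have "zs (\<lambda>k. zs (\<lambda>j. w j * ((-1) powi k * q powi (k*(k-1) div 2) * PP q j k)))
      = zs (\<lambda>j. zs (\<lambda>k. w j * ((-1) powi k * q powi (k*(k-1) div 2) * PP q j k)))"
  proof (rule zs_swap[of "{-l..l}" "{0..l}"])
    fix k j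
    assume "w j * ((-1) powi k * q powi (k*(k-1) div 2) * PP q j k) \<noteq> 0"
    then have "PP q j k \<noteq> 0" "qpinv q (l-j) \<noteq> 0" by (auto simp: w_def)
    then show "k \<in> {-l..l} \<and> j \<in> {0..l}" using PP_nz Q_nz by fastforce
  qed auto
  also have "\<dots> = zs (\<lambda>j. w j * (if j = 0 then 1 else 0))"
    by (rule zs_cong) (simp add: zs_cmult U)
  also have "\<dots> = w 0" by (subst zs_single[where a=0]) auto
  finally show ?thesis unfolding w_def by (simp add: algebra_simps)
qed

lemma exp3: "(3*k^2 - k) div 2 = k*(k-1) div 2 + (k::int)^2"
proof -
  have "3*k^2 - k = k*(k-1) + k^2 * 2" by (simp add: power2_eq_square algebra_simps)
  then show ?thesis by simp
qed

lemma Dixon: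
  assumes a: "0 \<le> a" and b: "0 \<le> b"
  shows "zs (\<lambda>k. (-1) powi k * q powi ((3*k^2 - k) div 2) * PP q a k * PP q b k * PP q c k)
    = R q (a+b+c) * qpinv q a * qpinv q b * qpinv q c * qpinv q (a+b) * qpinv q (a+c) * qpinv q (b+c)"
proof (cases "c < 0")
  case True
  then show ?thesis by (auto intro!: zs_zero simp: PP_negj Qneg)
next
  case False
  then have c: "0 \<le> c" by simp
  define w where "w i = q powi (i^2) * qpinv q (b-i) * qpinv q (c-i)" for i
  have "zs (\<lambda>k. (-1) powi k * q powi ((3*k^2 - k) div 2) * PP q a k * PP q b k * PP q c k)
      = zs (\<lambda>k. qpinv q (b+c) * zs (\<lambda>i. w i * ((-1) powi k * q powi (k*(k-1) div 2) * PP q a k * PP q i k)))"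
  proof (rule zs_cong)
    fix k :: int
    have "q powi (k^2) * PP q b k * PP q c k = qpinv q (b+c) * zs (\<lambda>i. w i * PP q i k)"
      unfolding w_def using K1[OF b c, of k] by (simp add: mult.assoc)
    moreover have "zs (\<lambda>i. w i * ((-1) powi k * q powi (k*(k-1) div 2) * PP q a k * PP q i k))
        = ((-1) powi k * q powi (k*(k-1) div 2) * PP q a k) * zs (\<lambda>i. w i * PP q i k)"
      by (subst zs_cmult[symmetric]) (simp add: algebra_simps)
    moreover have "q powi ((3*k^2 - k) div 2) = q powi (k*(k-1) div 2) * q powi (k^2)"
      unfolding exp3 by (rule pw)
    ultimately show "(-1) powi k * q powi ((3*k^2 - k) div 2) * PP q a k * PP q b k * PP q c k
      = qpinv q (b+c) * zs (\<lambda>i. w i * ((-1) powi k * q powi (k*(k-1) div 2) * PP q a k * PP q i k))"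
      by (simp add: algebra_simps)
  qed
  also have "\<dots> = qpinv q (b+c) * zs (\<lambda>k. zs (\<lambda>i. w i * ((-1) powi k * q powi (k*(k-1) div 2) * PP q a k * PP q i k)))"
    by (rule zs_cmult)
  also have "zs (\<lambda>k. zs (\<lambda>i. w i * ((-1) powi k * q powi (k*(k-1) div 2) * PP q a k * PP q i k)))
      = zs (\<lambda>i. zs (\<lambda>k. w i * ((-1) powi k * q powi (k*(k-1) div 2) * PP q a k * PP q i k)))"
  proof (rule zs_swap[of "{-b..b}" "{0..b}"])
    fix k i
    assume "w i * ((-1) powi k * q powi (k*(k-1) div 2) * PP q a k * PP q i k) \<noteq> 0"
    then have "PP q i k \<noteq> 0" "qpinv q (b-i) \<noteq> 0" by (auto simp: w_def)
    then show "k \<in> {-b..b} \<and> i \<in> {0..b}" using PP_nz Q_nz by fastforce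
  qed auto
  also have "\<dots> = zs (\<lambda>i. w i * (q powi (a*i) * qpinv q a * qpinv q i * qpinv q (a+i)))"
    by (rule zs_cong) (simp add: zs_cmult E[OF a])
  also have "\<dots> = zs (\<lambda>i. qpinv q a * (q powi (i*(a+i)) * qpinv q i * qpinv q (b-i) * qpinv q (c-i) * qpinv q (a+i)))"
  proof (rule zs_cong)
    fix i :: int
    have "q powi (i^2) * q powi (a*i) = q powi (i*(a+i))"
      by (metis pw power2_eq_square distrib_left mult.commute)
    then show "w i * (q powi (a*i) * qpinv q a * qpinv q i * qpinv q (a+i))
      = qpinv q a * (q powi (i*(a+i)) * qpinv q i * qpinv q (b-i) * qpinv q (c-i) * qpinv q (a+i))"
      unfolding w_def by (simp add: algebra_simps)
  qed
  also have "\<dots> = qpinv q a * zs (\<lambda>i. q powi (i*(a+i)) * qpinv q i * qpinv q (b-i) * qpinv q (c-i) * qpinv q (a+i))"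
    by (rule zs_cmult)
  finally have L: "zs (\<lambda>k. (-1) powi k * q powi ((3*k^2 - k) div 2) * PP q a k * PP q b k * PP q c k)
     = qpinv q (b+c) * (qpinv q a * zs (\<lambda>i. q powi (i*(a+i)) * qpinv q i * qpinv q (b-i) * qpinv q (c-i) * qpinv q (a+i)))" .
  obtain N where N: "b = int N" using b by (metis nonneg_eq_int)
  have v: "zs (\<lambda>i. q powi (i*((a+c)-c+i)) * qb q (int N) i * qb q (a+c) (c-i)) = qb q (int N + (a+c)) c"
    using a c by (intro V1) simp
  define f where "f i = q powi (i*(a+i)) * qpinv q i * qpinv q (b-i) * qpinv q (c-i) * qpinv q (a+i)" for i
  have "zs (\<lambda>i. q powi (i*((a+c)-c+i)) * qb q (int N) i * qb q (a+c) (c-i))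
     = zs (\<lambda>i. (R q b * R q (a+c)) * f i)"
    unfolding f_def by (rule zs_cong) (simp add: qb_def N[symmetric] algebra_simps)
  also have "\<dots> = R q b * R q (a+c) * zs f" by (rule zs_cmult)
  finally have "R q b * R q (a+c) * zs f = qb q (int N + (a+c)) c" using v by simp
  also have "qb q (int N + (a+c)) c = R q (a+b+c) * qpinv q c * qpinv q (a+b)"
    by (simp add: qb_def N[symmetric] algebra_simps)
  finally have "R q b * R q (a+c) * zs f = R q (a+b+c) * qpinv q c * qpinv q (a+b)" .
  then have "R q b * R q (a+c) * zs (\<lambda>i. q powi (i*(a+i)) * qpinv q i * qpinv q (b-i) * qpinv q (c-i) * qpinv q (a+i))
      = R q (a+b+c) * qpinv q c * qpinv q (a+b)" unfolding f_def .
  from solveR[OF b _ this] a c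
  have "zs (\<lambda>i. q powi (i*(a+i)) * qpinv q i * qpinv q (b-i) * qpinv q (c-i) * qpinv q (a+i))
      = qpinv q b * qpinv q (a+c) * (R q (a+b+c) * qpinv q c * qpinv q (a+b))" by simp
  then show ?thesis unfolding L by (simp add: algebra_simps)
qed

lemma T1:
  assumes l: "0 \<le> l" and m: "0 \<le> m" and n: "0 \<le> n" and k: "0 \<le> k"
  shows "R q (l+m+n-k) * qpinv q (l-k) * qpinv q (m-k)
    = R q (l+n) * R q (m+n) * zs (\<lambda>r. q powi ((r-k)*(n+r)) * qpinv q (l-r) * qpinv q (m-r) * qpinv q (r-k) * qpinv q (n+r))"
proof (cases "l < k")
  case True
  have "zs (\<lambda>r. q powi ((r-k)*(n+r)) * qpinv q (l-r) * qpinv q (m-r) * qpinv q (r-k) * qpinv q (n+r)) = 0"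
  proof (rule zs_zero)
    fix r :: int
    show "q powi ((r-k)*(n+r)) * qpinv q (l-r) * qpinv q (m-r) * qpinv q (r-k) * qpinv q (n+r) = 0"
      using True by (cases "r \<le> l") (auto simp: Qneg)
  qed
  then show ?thesis using True by (simp add: Qneg)
next
  case False
  obtain N where N: "l - k = int N" using False by (metis nonneg_eq_int not_less diff_ge_0_iff_ge)
  define f where "f i = q powi (i*(n+k+i)) * qpinv q i * qpinv q (l-k-i) * qpinv q (m-k-i) * qpinv q (n+k+i)" for i
  have v: "zs (\<lambda>i. q powi (i*((m+n)-(m-k)+i)) * qb q (int N) i * qb q (m+n) ((m-k)-i)) = qb q (int N + (m+n)) (m-k)"
    using m n by (intro V1) simp
  have "zs (\<lambda>i. q powi (i*((m+n)-(m-k)+i)) * qb q (int N) i * qb q (m+n) ((m-k)-i))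
     = zs (\<lambda>i. (R q (l-k) * R q (m+n)) * f i)"
    unfolding f_def by (rule zs_cong) (simp add: qb_def N[symmetric] algebra_simps)
  also have "\<dots> = R q (l-k) * R q (m+n) * zs f" by (rule zs_cmult)
  finally have "R q (l-k) * R q (m+n) * zs f = qb q (int N + (m+n)) (m-k)" using v by simp
  also have "qb q (int N + (m+n)) (m-k) = R q (l+m+n-k) * qpinv q (m-k) * qpinv q (l+n)"
    by (simp add: qb_def N[symmetric] algebra_simps)
  finally have "R q (l-k) * R q (m+n) * zs f = R q (l+m+n-k) * qpinv q (m-k) * qpinv q (l+n)" .
  from solveR[OF _ _ this] False m n
  have zf: "zs f = qpinv q (l-k) * qpinv q (m+n) * (R q (l+m+n-k) * qpinv q (m-k) * qpinv q (l+n))" by simp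
  have "zs (\<lambda>r. q powi ((r-k)*(n+r)) * qpinv q (l-r) * qpinv q (m-r) * qpinv q (r-k) * qpinv q (n+r))
      = zs (\<lambda>i. q powi ((i+k-k)*(n+(i+k))) * qpinv q (l-(i+k)) * qpinv q (m-(i+k)) * qpinv q (i+k-k) * qpinv q (n+(i+k)))"
    by (rule zs_shift[symmetric])
  also have "\<dots> = zs f"
    unfolding f_def by (rule zs_cong) (simp add: algebra_simps)
  finally have Z: "zs (\<lambda>r. q powi ((r-k)*(n+r)) * qpinv q (l-r) * qpinv q (m-r) * qpinv q (r-k) * qpinv q (n+r)) = zs f" .
  have RQ1: "R q (l+n) * qpinv q (l+n) = 1" "R q (m+n) * qpinv q (m+n) = 1"
    using l m n by (auto intro!: RQ)
  show ?thesis unfolding Z zf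
  proof -
    have "R q (l + n) * R q (m + n) * (qpinv q (l - k) * qpinv q (m + n) * (R q (l + m + n - k) * qpinv q (m - k) * qpinv q (l + n)))
       = (R q (l+n) * qpinv q (l+n)) * (R q (m+n) * qpinv q (m+n)) * (R q (l + m + n - k) * qpinv q (l - k) * qpinv q (m - k))"
      by (simp add: algebra_simps)
    also have "\<dots> = R q (l + m + n - k) * qpinv q (l - k) * qpinv q (m - k)"
      by (simp only: RQ1 mult_1_left)
    finally show "R q (l + m + n - k) * qpinv q (l - k) * qpinv q (m - k) =
      R q (l + n) * R q (m + n) * (qpinv q (l - k) * qpinv q (m + n) * (R q (l + m + n - k) * qpinv q (m - k) * qpinv q (l + n)))"
      by (rule sym)
  qed
qed

lemma T2:
  assumes n: "0 \<le> n" and u: "0 \<le> u"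
  shows "zs (\<lambda>k. q powi ((r-k)*(n-k)) * qpinv q k * qpinv q (r-k) * qpinv q (n-k) * qpinv q (u+k))
    = qpinv q r * qpinv q (n+u) * R q (r+n+u) * qpinv q n * qpinv q (r+u)"
proof (cases "r < 0")
  case True
  have "zs (\<lambda>k. q powi ((r-k)*(n-k)) * qpinv q k * qpinv q (r-k) * qpinv q (n-k) * qpinv q (u+k)) = 0"
  proof (rule zs_zero)
    fix k :: int
    show "q powi ((r-k)*(n-k)) * qpinv q k * qpinv q (r-k) * qpinv q (n-k) * qpinv q (u+k) = 0"
      using True by (cases "0 \<le> k") (auto simp: Qneg)
  qed
  then show ?thesis using True by (simp add: Qneg)
next
  case False
  obtain N where N: "r = int N" using False by (metis nonneg_eq_int not_less)
  define f where "f k = q powi ((r-k)*(n-k)) * qpinv q k * qpinv q (r-k) * qpinv q (n-k) * qpinv q (u+k)" for k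
  have v: "zs (\<lambda>k. q powi ((int N - k)*(n-k)) * qb q (int N) k * qb q (n+u) (n-k)) = qb q (int N + (n+u)) n"
    using n u by (intro V2) simp
  have "zs (\<lambda>k. q powi ((int N - k)*(n-k)) * qb q (int N) k * qb q (n+u) (n-k))
     = zs (\<lambda>k. (R q r * R q (n+u)) * f k)"
    unfolding f_def by (rule zs_cong) (simp add: qb_def N[symmetric] algebra_simps)
  also have "\<dots> = R q r * R q (n+u) * zs f" by (rule zs_cmult)
  finally have "R q r * R q (n+u) * zs f = qb q (int N + (n+u)) n" using v by simp
  also have "qb q (int N + (n+u)) n = R q (r+n+u) * qpinv q n * qpinv q (r+u)"
    by (simp add: qb_def N[symmetric] algebra_simps)
  finally have "R q r * R q (n+u) * zs f = R q (r+n+u) * qpinv q n * qpinv q (r+u)" .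
  from solveR[OF _ _ this] False n u
  have "zs f = qpinv q r * qpinv q (n+u) * (R q (r+n+u) * qpinv q n * qpinv q (r+u))" by simp
  then show ?thesis unfolding f_def by (simp add: algebra_simps)
qed

lemma I1:
  assumes l: "0 \<le> l" and m: "0 \<le> m" and n: "0 \<le> n" and u: "0 \<le> u"
  shows "zs (\<lambda>k. q powi (k^2) * R q (l+m+n-k) * qpinv q k * qpinv q (l-k) * qpinv q (m-k) * qpinv q (n-k) * qpinv q (u+k))
    = R q (l+n) * R q (m+n) * qpinv q n * qpinv q (n+u)
      * zs (\<lambda>r. q powi (r^2) * R q (n+u+r) * qpinv q r * qpinv q (l-r) * qpinv q (m-r) * qpinv q (n+r) * qpinv q (u+r))"
proof -
  define g where "g k r = (q powi (k^2) * qpinv q k * qpinv q (n-k) * qpinv q (u+k))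
     * (q powi ((r-k)*(n+r)) * qpinv q (l-r) * qpinv q (m-r) * qpinv q (r-k) * qpinv q (n+r))" for k r
  have "zs (\<lambda>k. q powi (k^2) * R q (l+m+n-k) * qpinv q k * qpinv q (l-k) * qpinv q (m-k) * qpinv q (n-k) * qpinv q (u+k))
      = zs (\<lambda>k. R q (l+n) * R q (m+n) * zs (\<lambda>r. g k r))"
  proof (rule zs_cong)
    fix k :: int
    define c where "c = q powi (k^2) * qpinv q k * qpinv q (n-k) * qpinv q (u+k)"
    have "zs (\<lambda>r. g k r) = c * zs (\<lambda>r. q powi ((r-k)*(n+r)) * qpinv q (l-r) * qpinv q (m-r) * qpinv q (r-k) * qpinv q (n+r))"
      unfolding g_def c_def by (rule zs_cmult)
    moreover have "R q (l+m+n-k) * qpinv q (l-k) * qpinv q (m-k) * c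
       = R q (l+n) * R q (m+n) * zs (\<lambda>r. q powi ((r-k)*(n+r)) * qpinv q (l-r) * qpinv q (m-r) * qpinv q (r-k) * qpinv q (n+r)) * c"
    proof (cases "0 \<le> k")
      case True then show ?thesis using T1[OF l m n True] by simp
    next
      case False then show ?thesis by (simp add: c_def Qneg)
    qed
    ultimately show "q powi (k^2) * R q (l+m+n-k) * qpinv q k * qpinv q (l-k) * qpinv q (m-k) * qpinv q (n-k) * qpinv q (u+k)
      = R q (l+n) * R q (m+n) * zs (\<lambda>r. g k r)"
      unfolding c_def by (simp add: algebra_simps)
  qed
  also have "\<dots> = R q (l+n) * R q (m+n) * zs (\<lambda>k. zs (\<lambda>r. g k r))"
    by (rule zs_cmult)
  also have "zs (\<lambda>k. zs (\<lambda>r. g k r)) = zs (\<lambda>r. zs (\<lambda>k. g k r))"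
  proof (rule zs_swap[of "{0..n}" "{0..l}"])
    fix k r
    assume "g k r \<noteq> 0"
    then have "qpinv q k \<noteq> 0" "qpinv q (n-k) \<noteq> 0" "qpinv q (l-r) \<noteq> 0" "qpinv q (r-k) \<noteq> 0"
      by (auto simp: g_def)
    then have "0 \<le> k" "0 \<le> n-k" "0 \<le> l-r" "0 \<le> r-k" using Q_nz by blast+
    then show "k \<in> {0..n} \<and> r \<in> {0..l}" by simp
  qed auto
  also have "\<dots> = zs (\<lambda>r. (q powi (r^2) * qpinv q (l-r) * qpinv q (m-r) * qpinv q (n+r)) *
       (qpinv q r * qpinv q (n+u) * R q (r+n+u) * qpinv q n * qpinv q (r+u)))"
  proof (rule zs_cong)
    fix r :: int
    have "zs (\<lambda>k. g k r) = zs (\<lambda>k. (q powi (r^2) * qpinv q (l-r) * qpinv q (m-r) * qpinv q (n+r)) *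
       (q powi ((r-k)*(n-k)) * qpinv q k * qpinv q (r-k) * qpinv q (n-k) * qpinv q (u+k)))"
    proof (rule zs_cong)
      fix k :: int
      have "q powi (k^2) * q powi ((r-k)*(n+r)) = q powi (r^2) * q powi ((r-k)*(n-k))"
        by (rule pw2) (simp add: power2_eq_square algebra_simps)
      then show "g k r = (q powi (r^2) * qpinv q (l-r) * qpinv q (m-r) * qpinv q (n+r)) *
       (q powi ((r-k)*(n-k)) * qpinv q k * qpinv q (r-k) * qpinv q (n-k) * qpinv q (u+k))"
        unfolding g_def by (simp add: algebra_simps)
    qed
    then show "zs (\<lambda>k. g k r) = (q powi (r^2) * qpinv q (l-r) * qpinv q (m-r) * qpinv q (n+r)) *
       (qpinv q r * qpinv q (n+u) * R q (r+n+u) * qpinv q n * qpinv q (r+u))"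
      by (simp add: zs_cmult T2[OF n u])
  qed
  also have "\<dots> = zs (\<lambda>r. (qpinv q n * qpinv q (n+u)) *
       (q powi (r^2) * R q (n+u+r) * qpinv q r * qpinv q (l-r) * qpinv q (m-r) * qpinv q (n+r) * qpinv q (u+r)))"
    by (rule zs_cong) (simp add: algebra_simps)
  also have "\<dots> = qpinv q n * qpinv q (n+u) *
       zs (\<lambda>r. q powi (r^2) * R q (n+u+r) * qpinv q r * qpinv q (l-r) * qpinv q (m-r) * qpinv q (n+r) * qpinv q (u+r))"
    by (rule zs_cmult)
  finally show ?thesis by (simp add: algebra_simps)
qed

lemma exp5: "(5*k^2 - k) div 2 = (3*k^2 - k) div 2 + (k::int)^2"
proof -
  have "5*k^2 - k = (3*k^2 - k) + k^2 * 2" by simp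
  then show ?thesis by simp
qed

lemma Sym:
  assumes l: "0 \<le> l" and m: "0 \<le> m" and n: "0 \<le> n" and u: "0 \<le> u"
  shows "zs (\<lambda>k. (-1) powi k * q powi ((5*k^2 - k) div 2) * PP q l k * PP q m k * PP q n k * PP q u k)
    = qpinv q (l+m) * qpinv q (l+n) * qpinv q (m+n) * qpinv q u *
      zs (\<lambda>k. q powi (k^2) * R q (l+m+n-k) * qpinv q k * qpinv q (l-k) * qpinv q (m-k) * qpinv q (n-k) * qpinv q (u+k))"
proof -
  define J where "J = zs (\<lambda>r. q powi (r^2) * R q (n+u+r) * qpinv q r * qpinv q (l-r) * qpinv q (m-r) * qpinv q (n+r) * qpinv q (u+r))"
  define w where "w r = q powi (r^2) * qpinv q (l-r) * qpinv q (m-r)" for r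
  have "zs (\<lambda>k. (-1) powi k * q powi ((5*k^2 - k) div 2) * PP q l k * PP q m k * PP q n k * PP q u k)
      = zs (\<lambda>k. qpinv q (l+m) * zs (\<lambda>r. w r * ((-1) powi k * q powi ((3*k^2 - k) div 2) * PP q n k * PP q u k * PP q r k)))"
  proof (rule zs_cong)
    fix k :: int
    have "q powi (k^2) * PP q l k * PP q m k = qpinv q (l+m) * zs (\<lambda>r. w r * PP q r k)"
      unfolding w_def using K1[OF l m, of k] by (simp add: mult.assoc)
    moreover have "zs (\<lambda>r. w r * ((-1) powi k * q powi ((3*k^2 - k) div 2) * PP q n k * PP q u k * PP q r k))
        = ((-1) powi k * q powi ((3*k^2 - k) div 2) * PP q n k * PP q u k) * zs (\<lambda>r. w r * PP q r k)"
      by (subst zs_cmult[symmetric]) (simp add: algebra_simps)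
    moreover have "q powi ((5*k^2 - k) div 2) = q powi ((3*k^2 - k) div 2) * q powi (k^2)"
      unfolding exp5 by (rule pw)
    ultimately show "(-1) powi k * q powi ((5*k^2 - k) div 2) * PP q l k * PP q m k * PP q n k * PP q u k
      = qpinv q (l+m) * zs (\<lambda>r. w r * ((-1) powi k * q powi ((3*k^2 - k) div 2) * PP q n k * PP q u k * PP q r k))"
      by (simp add: algebra_simps)
  qed
  also have "\<dots> = qpinv q (l+m) * zs (\<lambda>k. zs (\<lambda>r. w r * ((-1) powi k * q powi ((3*k^2 - k) div 2) * PP q n k * PP q u k * PP q r k)))"
    by (rule zs_cmult)
  also have "zs (\<lambda>k. zs (\<lambda>r. w r * ((-1) powi k * q powi ((3*k^2 - k) div 2) * PP q n k * PP q u k * PP q r k)))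
      = zs (\<lambda>r. zs (\<lambda>k. w r * ((-1) powi k * q powi ((3*k^2 - k) div 2) * PP q n k * PP q u k * PP q r k)))"
  proof (rule zs_swap[of "{-l..l}" "{0..l}"])
    fix k r
    assume "w r * ((-1) powi k * q powi ((3*k^2 - k) div 2) * PP q n k * PP q u k * PP q r k) \<noteq> 0"
    then have "PP q r k \<noteq> 0" "qpinv q (l-r) \<noteq> 0" by (auto simp: w_def)
    then show "k \<in> {-l..l} \<and> r \<in> {0..l}" using PP_nz Q_nz by fastforce
  qed auto
  also have "\<dots> = zs (\<lambda>r. w r * (R q (n+u+r) * qpinv q n * qpinv q u * qpinv q r * qpinv q (n+u) * qpinv q (n+r) * qpinv q (u+r)))"
    by (rule zs_cong) (simp add: zs_cmult Dixon[OF n u])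
  also have "\<dots> = zs (\<lambda>r. (qpinv q n * qpinv q u * qpinv q (n+u)) *
      (q powi (r^2) * R q (n+u+r) * qpinv q r * qpinv q (l-r) * qpinv q (m-r) * qpinv q (n+r) * qpinv q (u+r)))"
    unfolding w_def by (rule zs_cong) (simp add: algebra_simps)
  also have "\<dots> = qpinv q n * qpinv q u * qpinv q (n+u) * J"
    unfolding J_def by (rule zs_cmult)
  finally have L: "zs (\<lambda>k. (-1) powi k * q powi ((5*k^2 - k) div 2) * PP q l k * PP q m k * PP q n k * PP q u k)
     = qpinv q (l+m) * (qpinv q n * qpinv q u * qpinv q (n+u) * J)" .
  have RQ1: "qpinv q (l+n) * R q (l+n) = 1" "qpinv q (m+n) * R q (m+n) = 1"
    using l m n by (auto intro!: QR)
  have "qpinv q (l+m) * qpinv q (l+n) * qpinv q (m+n) * qpinv q u * (R q (l+n) * R q (m+n) * qpinv q n * qpinv q (n+u) * J)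
      = (qpinv q (l+n) * R q (l+n)) * (qpinv q (m+n) * R q (m+n)) * (qpinv q (l+m) * (qpinv q n * qpinv q u * qpinv q (n+u) * J))"
    by (simp add: algebra_simps)
  also have "\<dots> = qpinv q (l+m) * (qpinv q n * qpinv q u * qpinv q (n+u) * J)"
    by (simp only: RQ1 mult_1_left)
  finally have X: "qpinv q (l+m) * qpinv q (l+n) * qpinv q (m+n) * qpinv q u * (R q (l+n) * R q (m+n) * qpinv q n * qpinv q (n+u) * J)
      = qpinv q (l+m) * (qpinv q n * qpinv q u * qpinv q (n+u) * J)" .
  show ?thesis unfolding L I1[OF l m n u] J_def[symmetric] by (rule X[symmetric])
qed

lemma m1neg: "(-1::complex) powi (-k) = (-1) powi k"
proof (cases "k \<ge> 0")
  case True
  then obtain n where "k = int n" by (metis nonneg_eq_int)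
  then show ?thesis by (simp add: power_int_minus inverse_eq_iff_eq power_inverse[symmetric])
next
  case False
  then obtain n where "k = - int n" by (metis le_cases neg_0_le_iff_le nonneg_eq_int minus_minus)
  then show ?thesis by (simp add: power_int_minus inverse_eq_iff_eq power_inverse[symmetric])
qed

lemma reflH:
  "zs (\<lambda>k. (-1) powi k * q powi ((5*k^2 - k) div 2) * PP q l k * PP q m k * PP q n k * PP q a k * q powi k)
   = zs (\<lambda>k. (-1) powi k * q powi ((5*k^2 - k) div 2) * PP q l k * PP q m k * PP q n k * PP q a k)"
proof -
  have "zs (\<lambda>k. (-1) powi k * q powi ((5*k^2 - k) div 2) * PP q l k * PP q m k * PP q n k * PP q a k * q powi k)
     = zs (\<lambda>k. (-1) powi (-k) * q powi ((5*(-k)^2 - (-k)) div 2) * PP q l (-k) * PP q m (-k) * PP q n (-k) * PP q a (-k) * q powi (-k))"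
    by (rule zs_refl[symmetric])
  also have "\<dots> = zs (\<lambda>k. (-1) powi k * q powi ((5*k^2 - k) div 2) * PP q l k * PP q m k * PP q n k * PP q a k)"
  proof (rule zs_cong)
    fix k :: int
    have e: "(5*(-k)^2 - (-k)) div 2 = (5*k^2 - k) div 2 + k"
    proof -
      have "5*(-k)^2 - (-k) = (5*k^2 - k) + k * 2" by simp
      then show ?thesis by simp
    qed
    have "q powi ((5*(-k)^2 - (-k)) div 2) * q powi (-k) = q powi ((5*k^2 - k) div 2) * q powi 0"
      by (rule pw2) (simp add: e)
    then show "(-1) powi (-k) * q powi ((5*(-k)^2 - (-k)) div 2) * PP q l (-k) * PP q m (-k) * PP q n (-k) * PP q a (-k) * q powi (-k)
       = (-1) powi k * q powi ((5*k^2 - k) div 2) * PP q l k * PP q m k * PP q n k * PP q a k"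
      by (simp add: PP_neg m1neg algebra_simps)
  qed
  finally show ?thesis .
qed

lemma rhs_conv:
  assumes "\<And>k. k \<notin> {-W..W} \<Longrightarrow> f k = 0"
  shows "infsum f UNIV = zs f"
proof -
  have "infsum f UNIV = infsum f {-W..W}"
    by (rule infsum_cong_neutral) (use assms in auto)
  also have "\<dots> = sum f {-W..W}" by simp
  also have "\<dots> = zs f" by (rule zs_eq[symmetric]) (use assms in auto)
  finally show ?thesis .
qed

lemma lhs_conv:
  fixes l m n u :: nat and w :: "nat \<Rightarrow> complex" and Wf :: "int \<Rightarrow> complex"
  assumes W: "\<And>k. Wf (int k) = w k"
  shows "(\<Sum>k. w k * qpoch q (l+m+n-k) * qpinv q (int k) * qpinv q (int l - int k) * qpinv q (int m - int k)
            * qpinv q (int n - int k) * qpinv q (int u + int k))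
    = zs (\<lambda>k. Wf k * R q (int l + int m + int n - k) * qpinv q k * qpinv q (int l - k) * qpinv q (int m - k)
            * qpinv q (int n - k) * qpinv q (int u + k))"
proof -
  let ?f = "\<lambda>k. w k * qpoch q (l+m+n-k) * qpinv q (int k) * qpinv q (int l - int k) * qpinv q (int m - int k)
            * qpinv q (int n - int k) * qpinv q (int u + int k)"
  let ?g = "\<lambda>k. Wf k * R q (int l + int m + int n - k) * qpinv q k * qpinv q (int l - k) * qpinv q (int m - k)
            * qpinv q (int n - k) * qpinv q (int u + k)"
  have "suminf ?f = sum ?f {0..l}"
    by (rule suminf_finite) (auto simp: Qneg)
  also have "\<dots> = sum (?g \<circ> int) {0..l}"
  proof (rule sum.cong)
    fix k assume "k \<in> {0..l}"
    then have "nat (int l + int m + int n - int k) = l + m + n - k" by auto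
    then show "?f k = (?g \<circ> int) k" by (simp add: W R_def)
  qed simp
  also have "\<dots> = sum ?g (int ` {0..l})"
    by (rule sum.reindex[symmetric]) simp
  also have "int ` {0..l} = {0..int l}" by (simp add: image_int_atLeastAtMost)
  also have "sum ?g {0..int l} = zs ?g"
    by (rule zs_eq[symmetric]) (auto simp: Qneg)
  finally show ?thesis .
qed

lemma final:
  fixes l m n u :: nat
  assumes u1: "u \<ge> 1"
  shows "(\<Sum>k. q ^ (k^2) * qpoch q (l + m + n - k)
            * qpinv q (int k) * qpinv q (int l - int k) * qpinv q (int m - int k)
            * qpinv q (int n - int k) * qpinv q (int u + int k))
       = (\<Sum>\<^sub>\<infinity>k::int. (-1) powi k * q powi ((5 * k^2 - k) div 2)
            * qpoch q (l + m) * qpoch q (l + n) * qpoch q (m + n) * qpoch q (u - 1)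
            * qpinv q (int l - k) * qpinv q (int m - k) * qpinv q (int n - k)
            * qpinv q (int u - k) * qpinv q (int l + k) * qpinv q (int m + k)
            * qpinv q (int n + k) * qpinv q (int u + k - 1))
       \<and> (\<Sum>k. q ^ (k^2 + k) * qpoch q (l + m + n - k)
            * qpinv q (int k) * qpinv q (int l - int k) * qpinv q (int m - int k)
            * qpinv q (int n - int k) * qpinv q (int u + int k))
       = (\<Sum>\<^sub>\<infinity>k::int. (-1) powi k * q powi ((5 * k^2 - 3 * k) div 2)
            * qpoch q (l + m) * qpoch q (m + n) * qpoch q (l + n) * qpoch q (u - 1)
            * qpinv q (int l - k) * qpinv q (int m - k) * qpinv q (int n - k)
            * qpinv q (int u - k) * qpinv q (int l + k) * qpinv q (int m + k)
            * qpinv q (int n + k) * qpinv q (int u + k - 1))"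
proof -
  define H where "H k = (-1) powi k * q powi ((5*k^2 - k) div 2) * PP q (int l) k * PP q (int m) k * PP q (int n) k" for k
  define L0 where "L0 v = zs (\<lambda>k. q powi (k^2) * R q (int l + int m + int n - k) * qpinv q k * qpinv q (int l - k)
      * qpinv q (int m - k) * qpinv q (int n - k) * qpinv q (v + k))" for v
  define L1 where "L1 v = zs (\<lambda>k. q powi (k^2 + k) * R q (int l + int m + int n - k) * qpinv q k * qpinv q (int l - k)
      * qpinv q (int m - k) * qpinv q (int n - k) * qpinv q (v + k))" for v
  define C where "C = R q (int l + int m) * R q (int l + int n) * R q (int m + int n)"
  define W where "W = int l + int u"
  define U where "U = int u"
  have U1: "1 \<le> U" using u1 by (simp add: U_def)
  have Hz: "H k = 0" if "k \<notin> {-W..W}" for k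
  proof -
    have "int l - k < 0 \<or> int l + k < 0" using that by (auto simp: W_def)
    then show ?thesis by (auto simp: H_def PP_def Qneg)
  qed
  define A where "A = zs (\<lambda>k. H k * PP q U k)"
  define Cm where "Cm = zs (\<lambda>k. H k * PP q U k * q powi (- k))"
  have B: "zs (\<lambda>k. H k * PP q U k * q powi k) = A"
    unfolding A_def H_def by (rule reflH)
  have win: "zs f = sum f {-W..W}" if "\<And>k. k \<notin> {-W..W} \<Longrightarrow> f k = 0" for f
    by (rule zs_eq) (use that in auto)
  have sL: "L0 v = C * R q v * zs (\<lambda>k. H k * PP q v k)" if v: "0 \<le> v" for v
  proof -
    have "zs (\<lambda>k. H k * PP q v k) = qpinv q (int l + int m) * qpinv q (int l + int n) * qpinv q (int m + int n) * qpinv q v * L0 v"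
      unfolding H_def L0_def using Sym[of "int l" "int m" "int n" v] v by simp
    then have "C * R q v * zs (\<lambda>k. H k * PP q v k)
       = (R q (int l + int m) * qpinv q (int l + int m)) * (R q (int l + int n) * qpinv q (int l + int n))
         * (R q (int m + int n) * qpinv q (int m + int n)) * (R q v * qpinv q v) * L0 v"
      unfolding C_def by (simp add: algebra_simps)
    also have "\<dots> = L0 v" using v by (simp add: RQ)
    finally show ?thesis by simp
  qed
  have Rp: "qpoch q (l + m) = R q (int l + int m)" "qpoch q (l + n) = R q (int l + int n)"
     "qpoch q (m + n) = R q (int m + int n)" "qpoch q (u - 1) = R q (U - 1)"
    using u1 by (auto simp: R_def U_def nat_diff_distrib simp flip: of_nat_add)
  have RU: "R q U = R q (U - 1) * (1 - q powi U)"
    using Rrec[of "U - 1"] U1 by simp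
  have Qs: "qpinv q (U + k - 1) = (1 - q powi U * q powi k) * qpinv q (U + k)" for k
    using Qrec[of "U + k - 1"] pw[of U k] by simp
  have lhs1: "(\<Sum>k. q ^ (k^2) * qpoch q (l + m + n - k)
            * qpinv q (int k) * qpinv q (int l - int k) * qpinv q (int m - int k)
            * qpinv q (int n - int k) * qpinv q (int u + int k)) = L0 U"
    unfolding L0_def U_def
    by (rule lhs_conv) (metis of_nat_power power_int_of_nat)
  have lhs2: "(\<Sum>k. q ^ (k^2 + k) * qpoch q (l + m + n - k)
            * qpinv q (int k) * qpinv q (int l - int k) * qpinv q (int m - int k)
            * qpinv q (int n - int k) * qpinv q (int u + int k)) = L1 U"
    unfolding L1_def U_def
    by (rule lhs_conv) (metis of_nat_add of_nat_power power_int_of_nat)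
  define T1 where "T1 k = (-1) powi k * q powi ((5 * k^2 - k) div 2)
            * qpoch q (l + m) * qpoch q (l + n) * qpoch q (m + n) * qpoch q (u - 1)
            * qpinv q (int l - k) * qpinv q (int m - k) * qpinv q (int n - k)
            * qpinv q (int u - k) * qpinv q (int l + k) * qpinv q (int m + k)
            * qpinv q (int n + k) * qpinv q (int u + k - 1)" for k
  define T2 where "T2 k = (-1) powi k * q powi ((5 * k^2 - 3 * k) div 2)
            * qpoch q (l + m) * qpoch q (m + n) * qpoch q (l + n) * qpoch q (u - 1)
            * qpinv q (int l - k) * qpinv q (int m - k) * qpinv q (int n - k)
            * qpinv q (int u - k) * qpinv q (int l + k) * qpinv q (int m + k)
            * qpinv q (int n + k) * qpinv q (int u + k - 1)" for k
  have T1z: "T1 k = 0" if "k \<notin> {-W..W}" for k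
  proof -
    have "int l - k < 0 \<or> int l + k < 0" using that by (auto simp: W_def)
    then show ?thesis by (auto simp: T1_def Qneg)
  qed
  have T2z: "T2 k = 0" if "k \<notin> {-W..W}" for k
  proof -
    have "int l - k < 0 \<or> int l + k < 0" using that by (auto simp: W_def)
    then show ?thesis by (auto simp: T2_def Qneg)
  qed
  have rhs1: "infsum T1 UNIV = zs T1" by (rule rhs_conv[of W]) (rule T1z)
  have rhs2: "infsum T2 UNIV = zs T2" by (rule rhs_conv[of W]) (rule T2z)
  have T1e: "T1 k = C * R q (U - 1) * (H k * PP q U k) - C * R q (U - 1) * q powi U * (H k * PP q U k * q powi k)" for k
    unfolding T1_def Rp Qs[of k, unfolded U_def] H_def PP_def C_def U_def
    by (simp add: algebra_simps)
  have T2e: "T2 k = C * R q (U - 1) * (H k * PP q U k * q powi (- k)) - C * R q (U - 1) * q powi U * (H k * PP q U k)" for k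
  proof -
    have e: "(5 * k^2 - 3 * k) div 2 = (5*k^2 - k) div 2 + - k"
    proof -
      have "5 * k^2 - 3 * k = (5*k^2 - k) + (-k) * 2" by simp
      then show ?thesis by simp
    qed
    have e2: "q powi ((5 * k^2 - 3 * k) div 2) = q powi ((5*k^2 - k) div 2) * q powi (- k)"
      unfolding e by (rule pw)
    have e3: "q powi (- k) * q powi k = 1" using pw[of "-k" k] by simp
    have "T2 k = C * R q (U - 1) * (H k * PP q U k * q powi (- k)) * (1 - q powi U * q powi k)"
      unfolding T2_def Rp Qs[of k, unfolded U_def] H_def PP_def C_def U_def e2
      by (simp add: algebra_simps)
    also have "\<dots> = C * R q (U - 1) * (H k * PP q U k * q powi (- k)) - C * R q (U - 1) * q powi U * (H k * PP q U k) * (q powi (- k) * q powi k)"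
      by (simp add: algebra_simps)
    finally show ?thesis unfolding e3 by simp
  qed
  have zA: "zs (\<lambda>k. H k * PP q U k) = sum (\<lambda>k. H k * PP q U k) {-W..W}" by (rule win) (simp add: Hz)
  have zB: "zs (\<lambda>k. H k * PP q U k * q powi k) = sum (\<lambda>k. H k * PP q U k * q powi k) {-W..W}" by (rule win) (simp add: Hz)
  have zC: "zs (\<lambda>k. H k * PP q U k * q powi (-k)) = sum (\<lambda>k. H k * PP q U k * q powi (-k)) {-W..W}" by (rule win) (simp add: Hz)
  have "zs T1 = sum T1 {-W..W}" by (rule win) (rule T1z)
  also have "\<dots> = C * R q (U - 1) * sum (\<lambda>k. H k * PP q U k) {-W..W} - C * R q (U - 1) * q powi U * sum (\<lambda>k. H k * PP q U k * q powi k) {-W..W}"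
    unfolding T1e by (simp add: sum_subtractf sum_distrib_left)
  also have "\<dots> = C * R q (U - 1) * A - C * R q (U - 1) * q powi U * A"
    using B zA zB A_def by simp
  also have "\<dots> = C * R q U * A" unfolding RU by (simp add: algebra_simps)
  also have "\<dots> = L0 U" using sL[of U] U1 A_def by simp
  finally have id1: "zs T1 = L0 U" .
  have sL1: "L0 (U - 1) = C * R q (U - 1) * (A - q powi U * Cm - q powi U * A + q powi U * q powi U * A)"
  proof -
    have P1: "PP q (U - 1) k = (1 - q powi U * q powi (-k)) * (1 - q powi U * q powi k) * PP q U k" for k
    proof -
      have a1: "qpinv q (U - 1 - k) = (1 - q powi U * q powi (-k)) * qpinv q (U - k)"
        using Qrec[of "U - 1 - k"] pw[of U "-k"] by simp
      have a2: "qpinv q (U - 1 + k) = (1 - q powi U * q powi k) * qpinv q (U + k)"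
        using Qrec[of "U - 1 + k"] pw[of U k] by simp
      show ?thesis unfolding PP_def a1 a2 by (simp add: algebra_simps)
    qed
    have "zs (\<lambda>k. H k * PP q (U - 1) k) = sum (\<lambda>k. H k * PP q (U - 1) k) {-W..W}" by (rule win) (simp add: Hz)
    also have "\<dots> = sum (\<lambda>k. H k * PP q U k - q powi U * (H k * PP q U k * q powi (-k)) - q powi U * (H k * PP q U k * q powi k)
         + q powi U * q powi U * (H k * PP q U k * (q powi (-k) * q powi k))) {-W..W}"
      unfolding P1 by (rule sum.cong) (simp_all add: algebra_simps)
    also have "\<dots> = sum (\<lambda>k. H k * PP q U k - q powi U * (H k * PP q U k * q powi (-k)) - q powi U * (H k * PP q U k * q powi k)
         + q powi U * q powi U * (H k * PP q U k)) {-W..W}"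
    proof (rule sum.cong)
      fix k :: int
      have "q powi (-k) * q powi k = 1" using pw[of "-k" k] by simp
      then show "H k * PP q U k - q powi U * (H k * PP q U k * q powi (-k)) - q powi U * (H k * PP q U k * q powi k)
         + q powi U * q powi U * (H k * PP q U k * (q powi (-k) * q powi k))
         = H k * PP q U k - q powi U * (H k * PP q U k * q powi (-k)) - q powi U * (H k * PP q U k * q powi k)
         + q powi U * q powi U * (H k * PP q U k)" by simp
    qed simp
    also have "\<dots> = A - q powi U * Cm - q powi U * A + q powi U * q powi U * A"
      using B zA zB zC A_def Cm_def by (simp add: sum.distrib sum_subtractf flip: sum_distrib_left)
    finally have "zs (\<lambda>k. H k * PP q (U - 1) k) = A - q powi U * Cm - q powi U * A + q powi U * q powi U * A" .
    then show ?thesis using sL[of "U - 1"] U1 by simp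
  qed
  have Ldiff: "L0 U - L0 (U - 1) = q powi U * L1 U"
  proof -
    define X where "X k = q powi (k^2) * R q (int l + int m + int n - k) * qpinv q k * qpinv q (int l - k)
      * qpinv q (int m - k) * qpinv q (int n - k)" for k
    have Xz: "X k = 0" if "k \<notin> {-W..W}" for k
    proof -
      have "int l - k < 0 \<or> k < 0" using that by (auto simp: W_def)
      then show ?thesis by (auto simp: X_def Qneg)
    qed
    have "L0 U - L0 (U - 1) = sum (\<lambda>k. X k * qpinv q (U + k)) {-W..W} - sum (\<lambda>k. X k * qpinv q (U - 1 + k)) {-W..W}"
      unfolding L0_def X_def[symmetric] by (subst win, simp add: Xz)+ (rule refl)
    also have "\<dots> = sum (\<lambda>k. q powi U * (X k * q powi k * qpinv q (U + k))) {-W..W}"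
      unfolding sum_subtractf[symmetric]
    proof (rule sum.cong)
      fix k :: int
      have a2: "qpinv q (U - 1 + k) = (1 - q powi U * q powi k) * qpinv q (U + k)"
        using Qrec[of "U - 1 + k"] pw[of U k] by simp
      show "X k * qpinv q (U + k) - X k * qpinv q (U - 1 + k) = q powi U * (X k * q powi k * qpinv q (U + k))"
        unfolding a2 by (simp add: algebra_simps)
    qed simp
    also have "\<dots> = q powi U * L1 U"
    proof -
      have "L1 U = sum (\<lambda>k. X k * q powi k * qpinv q (U + k)) {-W..W}"
      proof -
        have "L1 U = zs (\<lambda>k. X k * q powi k * qpinv q (U + k))"
          unfolding L1_def X_def
        proof (rule zs_cong)
          fix k :: int
          have "q powi (k^2 + k) = q powi (k^2) * q powi k" by (rule pw)
          then show "q powi (k^2 + k) * R q (int l + int m + int n - k) * qpinv q k * qpinv q (int l - k)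
             * qpinv q (int m - k) * qpinv q (int n - k) * qpinv q (U + k) =
             q powi (k^2) * R q (int l + int m + int n - k) * qpinv q k * qpinv q (int l - k)
             * qpinv q (int m - k) * qpinv q (int n - k) * q powi k * qpinv q (U + k)"
            by (simp add: algebra_simps)
        qed
        also have "\<dots> = sum (\<lambda>k. X k * q powi k * qpinv q (U + k)) {-W..W}" by (rule win) (simp add: Xz)
        finally show ?thesis .
      qed
      then show ?thesis by (simp add: sum_distrib_left)
    qed
    finally show ?thesis .
  qed
  have "zs T2 = sum T2 {-W..W}" by (rule win) (rule T2z)
  also have "\<dots> = C * R q (U - 1) * Cm - C * R q (U - 1) * q powi U * A"
    unfolding T2e using zA zC A_def Cm_def by (simp add: sum_subtractf sum_distrib_left)
  finally have zT2: "zs T2 = C * R q (U - 1) * Cm - C * R q (U - 1) * q powi U * A" .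
  have "q powi U * L1 U = L0 U - L0 (U - 1)" using Ldiff by simp
  also have "\<dots> = C * R q U * A - C * R q (U - 1) * (A - q powi U * Cm - q powi U * A + q powi U * q powi U * A)"
    using sL[of U] U1 sL1 A_def by simp
  also have "\<dots> = q powi U * zs T2" unfolding zT2 RU by (simp add: algebra_simps)
  finally have "q powi U * L1 U = q powi U * zs T2" .
  then have id2: "L1 U = zs T2" using q0 by simp
  show ?thesis
    using lhs1 lhs2 rhs1 rhs2 id1 id2 unfolding T1_def T2_def by simp
qed

end

theorem corollary5p4:
  fixes q :: complex and l m n u :: nat
  assumes "0 < norm q" and "norm q < 1" and "u \<ge> 1"
  shows "(\<Sum>k. q ^ (k^2) * qpoch q (l + m + n - k)
            * qpinv q (int k) * qpinv q (int l - int k) * qpinv q (int m - int k)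
            * qpinv q (int n - int k) * qpinv q (int u + int k))
       = (\<Sum>\<^sub>\<infinity>k::int. (-1) powi k * q powi ((5 * k^2 - k) div 2)
            * qpoch q (l + m) * qpoch q (l + n) * qpoch q (m + n) * qpoch q (u - 1)
            * qpinv q (int l - k) * qpinv q (int m - k) * qpinv q (int n - k)
            * qpinv q (int u - k) * qpinv q (int l + k) * qpinv q (int m + k)
            * qpinv q (int n + k) * qpinv q (int u + k - 1))
       \<and> (\<Sum>k. q ^ (k^2 + k) * qpoch q (l + m + n - k)
            * qpinv q (int k) * qpinv q (int l - int k) * qpinv q (int m - int k)
            * qpinv q (int n - int k) * qpinv q (int u + int k))
       = (\<Sum>\<^sub>\<infinity>k::int. (-1) powi k * q powi ((5 * k^2 - 3 * k) div 2)
            * qpoch q (l + m) * qpoch q (m + n) * qpoch q (l + n) * qpoch q (u - 1)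
            * qpinv q (int l - k) * qpinv q (int m - k) * qpinv q (int n - k)
            * qpinv q (int u - k) * qpinv q (int l + k) * qpinv q (int m + k)
            * qpinv q (int n + k) * qpinv q (int u + k - 1))"
proof -
  have q0: "q \<noteq> 0" using assms(1) by auto
  show ?thesis using final[OF q0 assms(2) assms(3)] .
qed

end
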